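(* Let $n$ be odd, and let $C$ and $D$ be concentric ellipses in $\mathbb R^2$ with $D$ inside $C$. Let $P=(p_1,\dots,p_n)$ be a Poncelet $n$-gon for the pair $(C,D)$, and let $Q$ be the polygon whose $i$-th vertex is the intersection of the tangent lines to $C$ at $p_i$ and $p_{i+1}$. Then the ratio $\operatorname{Area}(Q)/\operatorname{Area}(P)$ is the same for all polygons $P$ in the Poncelet family containing $P$.
   Context: A Poncelet $n$-gon for the pair $(C,D)$ is a closed polygon $(p_1,\dots,p_n)$ (indices mod $n$) with all vertices on $C$ and all sides $p_ip_{i+1}$ tangent to $D$. By the Poncelet porism, if one such closed $n$-gon exists, then starting from any point of $C$ and successively drawing tangent lines to $D$ (always continuing in the same rotational sense) produces a closed $n$-gon; the Poncelet family is this continuous 1-parameter family of polygons. For self-intersecting polygons, area means the signed area given by the shoelace formula. *)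

theory Defs
  imports "HOL-Analysis.Analysis"
begin

type_synonym pt = "real \<times> real"

definition det2 :: "pt \<Rightarrow> pt \<Rightarrow> real" where
  "det2 u v = fst u * snd v - snd u * fst v"

text \<open>An ellipse with centre c and positive definite quadratic form
  Q(x,y) = a x^2 + 2 b x y + d y^2 is the curve Q(z - c) = 1.
  Every ellipse in the plane is of this form.\<close>
record ellipse =
  ctr :: pt
  ca :: real
  cb :: real
  cd :: real

definition is_ellipse :: "ellipse \<Rightarrow> bool" where
  "is_ellipse E \<longleftrightarrow> ca E > 0 \<and> ca E * cd E - (cb E)^2 > 0"

definition bform :: "ellipse \<Rightarrow> pt \<Rightarrow> pt \<Rightarrow> real" where
  "bform E u v = ca E * fst u * fst v + cb E * (fst u * snd v + snd u * fst v)
                 + cd E * snd u * snd v"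

definition qform :: "ellipse \<Rightarrow> pt \<Rightarrow> real" where
  "qform E z = bform E (z - ctr E) (z - ctr E)"

definition curve :: "ellipse \<Rightarrow> pt set" where
  "curve E = {z. qform E z = 1}"

definition ellipse_inside :: "ellipse \<Rightarrow> ellipse \<Rightarrow> bool" where
  "ellipse_inside D C \<longleftrightarrow> (\<forall>z \<in> curve D. qform C z < 1)"

definition concentric :: "ellipse \<Rightarrow> ellipse \<Rightarrow> bool" where
  "concentric C D \<longleftrightarrow> ctr C = ctr D"

definition tangent_line :: "ellipse \<Rightarrow> pt \<Rightarrow> pt set" where
  "tangent_line E p = {z. bform E (p - ctr E) (z - ctr E) = 1}"

text \<open>The directed segment from p to q lies on a line tangent to D, with D
  on the side prescribed by the rotational sense s (s = 1: D on the left,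
  s = -1: D on the right).  A line meeting the ellipse D and having all of
  D on one side is exactly a tangent line of D.\<close>
definition tangent_side :: "ellipse \<Rightarrow> real \<Rightarrow> pt \<Rightarrow> pt \<Rightarrow> bool" where
  "tangent_side D s p q \<longleftrightarrow> p \<noteq> q \<and>
     (\<exists>z \<in> curve D. det2 (q - p) (z - p) = 0) \<and>
     (\<forall>z \<in> curve D. s * det2 (q - p) (z - p) \<ge> 0)"

text \<open>For fixed (C,D,n,s) these polygons form
  exactly the Poncelet family: each vertex determines the next one uniquely.\<close>
definition poncelet_ngon :: "ellipse \<Rightarrow> ellipse \<Rightarrow> nat \<Rightarrow> real \<Rightarrow> (nat \<Rightarrow> pt) \<Rightarrow> bool" where
  "poncelet_ngon C D n s p \<longleftrightarrow> s \<in> {1, -1} \<and>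
     (\<forall>i < n. p i \<in> curve C \<and> tangent_side D s (p i) (p (Suc i mod n)))"

definition poly_area :: "nat \<Rightarrow> (nat \<Rightarrow> pt) \<Rightarrow> real" where
  "poly_area n p = (\<Sum>i<n. det2 (p i) (p (Suc i mod n))) / 2"

definition tangential_polygon :: "ellipse \<Rightarrow> nat \<Rightarrow> (nat \<Rightarrow> pt) \<Rightarrow> nat \<Rightarrow> pt" where
  "tangential_polygon C n p i =
     (THE q. q \<in> tangent_line C (p i) \<and> q \<in> tangent_line C (p (Suc i mod n)))"

end

theory Submission
  imports Defs
begin


definition ee :: "real \<Rightarrow> pt" where "ee t = (cos t, sin t)"

lemma det_ee: "det2 (ee a) (ee b) = sin (b - a)"
  by (simp add: det2_def ee_def sin_diff algebra_simps)

lemma bform_sym: "bform E u v = bform E v u"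
  by (simp add: bform_def algebra_simps)

lemma cone:
  assumes "a < c" "c < b" "b < a + pi"
  obtains l m where "l > 0" "m > 0" "l + m \<ge> 1"
    "ee c = (l * cos a + m * cos b, l * sin a + m * sin b)"
proof -
  have s: "sin (b - a) > 0" using assms by (intro sin_gt_zero) auto
  define l where "l = sin (b - c) / sin (b - a)"
  define m where "m = sin (c - a) / sin (b - a)"
  have l: "l > 0" unfolding l_def using assms s by (intro divide_pos_pos sin_gt_zero) auto
  have m: "m > 0" unfolding m_def using assms s by (intro divide_pos_pos sin_gt_zero) auto
  have e1: "cos c = l * cos a + m * cos b"
  proof -
    have "sin (b - c) * cos a + sin (c - a) * cos b = sin (b - a) * cos c"
      by (simp add: sin_diff algebra_simps)
    then show ?thesis using s unfolding l_def m_def by (simp add: field_simps)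
  qed
  have e2: "sin c = l * sin a + m * sin b"
  proof -
    have "sin (b - c) * sin a + sin (c - a) * sin b = sin (b - a) * sin c"
      by (simp add: sin_diff algebra_simps)
    then show ?thesis using s unfolding l_def m_def by (simp add: field_simps)
  qed
  have "1 = (cos c)^2 + (sin c)^2" by simp
  also have "\<dots> = l^2*((cos a)^2+(sin a)^2) + m^2*((cos b)^2+(sin b)^2) + 2*l*m*(cos a * cos b + sin a * sin b)"
    unfolding e1 e2 power2_eq_square by algebra
  also have "\<dots> = l^2 + m^2 + 2*l*m*(cos a * cos b + sin a * sin b)" by simp
  also have "cos a * cos b + sin a * sin b = cos (b - a)" by (simp add: cos_diff)
  also have "l^2 + m^2 + 2*l*m*cos (b - a) \<le> (l + m)^2"
    using l m cos_le_one[of "b-a"] by (simp add: power2_eq_square algebra_simps)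
  finally have "1 \<le> (l+m)^2" .
  have "1 \<le> l + m"
  proof (rule ccontr)
    assume "\<not> 1 \<le> l + m"
    then have "(l+m)^2 < 1^2" using l m by (intro power_strict_mono) auto
    then show False using \<open>1 \<le> (l+m)^2\<close> by simp
  qed
  then show ?thesis using that l m e1 e2 by (simp add: ee_def)
qed

lemma ee_unit: "fst (ee t)^2 + snd (ee t)^2 = 1"
  by (simp add: ee_def)

lemma bform_lin2:
  "bform E w (l * fst x + m * fst y, l * snd x + m * snd y) = l * bform E w x + m * bform E w y"
  by (simp add: bform_def algebra_simps)

lemma bform_neg: "bform E (- x) (- y) = bform E x y"
  by (simp add: bform_def)

lemma cone_G:
  assumes "a < c" "c < b" "b < a + pi" "bform E w (ee a) \<ge> 1" "bform E w (ee b) \<ge> 1"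
    "bform E w (ee a) > 1 \<or> bform E w (ee b) > 1"
  shows "bform E w (ee c) > 1"
proof -
  obtain l m where lm: "l > 0" "m > 0" "l + m \<ge> 1"
    "ee c = (l * cos a + m * cos b, l * sin a + m * sin b)"
    using cone[OF assms(1-3)] by blast
  have eq: "bform E w (ee c) = l * bform E w (ee a) + m * bform E w (ee b)"
    unfolding lm(4) using bform_lin2[of E w l "ee a" m "ee b"] by (simp add: ee_def)
  have 1: "l * bform E w (ee a) \<ge> l * 1" using lm assms(4) by (intro mult_left_mono) auto
  have 2: "m * bform E w (ee b) \<ge> m * 1" using lm assms(5) by (intro mult_left_mono) auto
  have 3: "l * bform E w (ee a) > l * 1 \<or> m * bform E w (ee b) > m * 1"
    using assms(6) lm by auto
  show ?thesis using eq 1 2 3 lm(3) by linarith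
qed

lemma step_lemma:
  assumes gp: "\<forall>x. fst x^2 + snd x^2 = 1 \<longrightarrow> bform E x x > 1"
    and "al < be" "be < al + pi" "al < al'" "al' < al + pi" "be < be'" "be' < be + pi"
    and r1: "bform E (ee al) (ee al') = 1" and r2: "bform E (ee be) (ee be') = 1"
  shows "al' < be'"
proof (rule ccontr)
  assume "\<not> al' < be'"
  then have le: "be' \<le> al'" by simp
  have g1: "bform E (ee t) (ee t) > 1" for t using gp ee_unit by blast
  have h1: "bform E (ee al') (ee be) > 1"
    using assms le by (intro cone_G) (auto simp: bform_sym[of E "ee al'" "ee al"] g1 less_imp_le[OF g1])
  show False
  proof (cases "be' = al'")
    case True
    then show ?thesis using h1 r2 bform_sym[of E "ee al'" "ee be"] by simp
  next
    case False
    then have "be' < al'" using le by simp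
    then have "bform E (ee be) (ee be') > 1"
      using assms h1 by (intro cone_G[of be be' al']) (auto simp: bform_sym[of E "ee al'" "ee be"] g1 less_imp_le[OF g1])
    then show False using r2 by simp
  qed
qed

lemma uniq_lemma:
  assumes gp: "\<forall>x. fst x^2 + snd x^2 = 1 \<longrightarrow> bform E x x > 1"
    and "al < a1" "a1 < al + pi" "al < a2" "a2 < al + pi"
    and r1: "bform E (ee al) (ee a1) = 1" and r2: "bform E (ee al) (ee a2) = 1"
  shows "a1 = a2"
proof (rule ccontr)
  have g1: "bform E (ee t) (ee t) > 1" for t using gp ee_unit by blast
  assume ne: "a1 \<noteq> a2"
  show False
  proof (cases "a1 < a2")
    case True
    then have "bform E (ee al) (ee a1) > 1" using assms g1 less_imp_le[OF g1] by (intro cone_G) auto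
    then show False using r1 by simp
  next
    case False
    then have "a2 < a1" using ne by simp
    then have "bform E (ee al) (ee a2) > 1" using assms g1 less_imp_le[OF g1] by (intro cone_G) auto
    then show False using r2 by simp
  qed
qed

lemma ee_surj:
  assumes "fst y^2 + snd y^2 = 1"
  obtains t where "ee t = y"
proof -
  obtain t where "fst y = cos t" "snd y = sin t" using sincos_total_2pi[OF assms] by metis
  then have "ee t = y" by (simp add: ee_def prod_eq_iff)
  then show ?thesis using that by blast
qed

lemma ee_shift2pi: "ee (t + 2 * pi * of_int k) = ee t"
  by (simp add: ee_def sin_add cos_add)

lemma lift_next:
  assumes "fst y^2 + snd y^2 = 1" "det2 (ee al) y > 0"
  shows "\<exists>psi. al < psi \<and> psi < al + pi \<and> ee psi = y"
proof -
  obtain t where t: "ee t = y" using ee_surj[OF assms(1)] by blast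
  define k where "k = \<lceil>(al - t) / (2*pi)\<rceil>"
  define psi where "psi = t + 2 * pi * of_int k"
  have "(al - t) / (2*pi) \<le> of_int k" unfolding k_def by linarith
  then have p1: "al \<le> psi" unfolding psi_def by (simp add: field_simps)
  have "of_int k < (al - t) / (2*pi) + 1" unfolding k_def by linarith
  then have p2: "psi < al + 2*pi" unfolding psi_def by (simp add: field_simps)
  have e: "ee psi = y" unfolding psi_def using t ee_shift2pi by simp
  have "sin (psi - al) > 0" using assms(2) e det_ee by metis
  then have "psi - al \<noteq> 0" by auto
  moreover have "\<not> pi \<le> psi - al"
  proof
    assume "pi \<le> psi - al"
    then have "sin (psi - al) \<le> 0" using p2 by (intro sin_le_zero) auto
    then show False using \<open>sin (psi - al) > 0\<close> by simp
  qed
  ultimately show ?thesis using p1 e by (intro exI[of _ psi]) auto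
qed

lemma ee_shift_int: "ee (t + of_int k * pi) = (if even k then ee t else - ee t)"
proof -
  have "cos (of_int k * pi) = (if even k then 1 else -1)" "sin (of_int k * pi) = 0"
    using cos_npi_int[of k] sin_npi_int[of k] by (simp_all add: mult.commute)
  then show ?thesis by (simp add: ee_def cos_add sin_add)
qed

lemma bform_shift_int:
  "bform E (ee (x + of_int k * pi)) (ee (y + of_int k * pi)) = bform E (ee x) (ee y)"
  by (simp add: ee_shift_int bform_neg)

lemma W1:
  fixes E :: ellipse and v :: "nat \<Rightarrow> pt" and n :: nat
  assumes gp: "\<forall>x. fst x^2 + snd x^2 = 1 \<longrightarrow> bform E x x > 1"
    and unit: "\<And>j. fst (v j)^2 + snd (v j)^2 = 1"
    and rel: "\<And>j. bform E (v j) (v (Suc j)) = 1"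
    and pos: "\<And>j. det2 (v j) (v (Suc j)) > 0"
    and per: "v (2*n) = v 0"
  shows "v n = v 0 \<or> v n = - v 0"
proof -
  obtain t0 where t0: "ee t0 = v 0" using ee_surj unit by blast
  define phi where "phi = rec_nat t0 (\<lambda>j x. SOME psi. x < psi \<and> psi < x + pi \<and> ee psi = v (Suc j))"
  have phi0: "phi 0 = t0" by (simp add: phi_def)
  have phiS: "phi (Suc j) = (SOME psi. phi j < psi \<and> psi < phi j + pi \<and> ee psi = v (Suc j))" for j
    by (simp add: phi_def)
  have L: "ee (phi j) = v j" for j
  proof (induction j)
    case 0 show ?case using t0 phi0 by simp
  next
    case (Suc j)
    have "\<exists>psi. phi j < psi \<and> psi < phi j + pi \<and> ee psi = v (Suc j)"
      using lift_next[of "v (Suc j)" "phi j"] unit pos Suc.IH by simp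
    from someI_ex[OF this] show ?case unfolding phiS by simp
  qed
  have S: "phi j < phi (Suc j) \<and> phi (Suc j) < phi j + pi" for j
  proof -
    have "\<exists>psi. phi j < psi \<and> psi < phi j + pi \<and> ee psi = v (Suc j)"
      using lift_next[of "v (Suc j)" "phi j"] unit pos L by simp
    from someI_ex[OF this] show ?thesis unfolding phiS by simp
  qed
  have R: "bform E (ee (phi j)) (ee (phi (Suc j))) = 1" for j using rel L by simp
  have "ee (phi (2*n)) = ee (phi 0)" using L per by simp
  then have "sin (phi (2*n)) = sin (phi 0) \<and> cos (phi (2*n)) = cos (phi 0)"
    by (simp add: ee_def)
  then obtain m :: int where m: "phi (2*n) = phi 0 + 2 * pi * of_int m"
    using sin_cos_eq_iff by blast
  define c where "c = phi n - phi 0"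
  define k where "k = \<lfloor>c / pi\<rfloor>"
  have "of_int k \<le> c / pi" unfolding k_def by linarith
  then have k1: "of_int k * pi \<le> c" by (simp add: field_simps)
  have "c / pi < of_int k + 1" unfolding k_def by linarith
  then have k2: "c < (of_int k + 1) * pi" by (simp add: field_simps)
  show ?thesis
  proof (cases "c = of_int k * pi")
    case True
    then have "phi n = phi 0 + of_int k * pi" unfolding c_def by simp
    then have "v n = (if even k then v 0 else - v 0)" using L[of n] L[of 0] ee_shift_int[of "phi 0" k] by (cases "even k") auto
    then show ?thesis by auto
  next
    case False
    then have k1': "of_int k * pi < c" using k1 by simp
    define a where "a j = phi j + of_int k * pi" for j
    define b where "b j = phi (n + j)" for j
    have I: "a j < b j \<and> b j < a j + pi" for j
    proof (induction j)
      case 0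
      show ?case using k1' k2 unfolding a_def b_def c_def by (simp add: algebra_simps)
    next
      case (Suc j)
      have Ra: "bform E (ee (a j)) (ee (a (Suc j))) = 1"
        unfolding a_def using bform_shift_int R by simp
      have Rb: "bform E (ee (b j)) (ee (b (Suc j))) = 1"
        unfolding b_def using R[of "n + j"] by simp
      have Sa: "a j < a (Suc j) \<and> a (Suc j) < a j + pi" using S[of j] unfolding a_def by simp
      have Sb: "b j < b (Suc j) \<and> b (Suc j) < b j + pi" using S[of "n+j"] unfolding b_def by simp
      have lo: "a (Suc j) < b (Suc j)"
        using step_lemma[OF gp, of "a j" "b j" "a (Suc j)" "b (Suc j)"] Suc.IH Ra Rb Sa Sb by simp
      have ap: "a i + pi = phi i + of_int (k + 1) * pi" for i unfolding a_def by (simp add: algebra_simps)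
      have Ra': "bform E (ee (a j + pi)) (ee (a (Suc j) + pi)) = 1"
        unfolding ap by (subst bform_shift_int) (rule R)
      have hi: "b (Suc j) < a (Suc j) + pi"
        using step_lemma[OF gp, of "b j" "a j + pi" "b (Suc j)" "a (Suc j) + pi"] Suc.IH Ra' Rb Sa Sb
        by simp
      show ?case using lo hi by simp
    qed
    have "n + n = 2 * n" by simp
    then have "b n = phi 0 + 2 * pi * of_int m" unfolding b_def using m by metis
    then have e1: "phi n + of_int k * pi < phi 0 + 2 * pi * of_int m"
      and e2: "phi 0 + 2 * pi * of_int m < phi n + of_int k * pi + pi"
      using I[of n] unfolding a_def by linarith+
    have X: "2 * pi * of_int m = 2 * (of_int m * pi)" by simp
    have "of_int k * pi < of_int m * pi" using e1 k1' X unfolding c_def by linarith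
    then have "k < m" by (simp add: mult_less_cancel_right)
    have Y: "(of_int k + 1) * pi = of_int k * pi + pi" by (simp add: algebra_simps)
    have "of_int m * pi < (of_int k + 1) * pi" using e2 k2 X Y unfolding c_def by linarith
    then have "m < k + 1" by (simp add: mult_less_cancel_right)
    then show ?thesis using \<open>k < m\<close> by linarith
  qed
qed

lemma uniq_vec:
  assumes gp: "\<forall>x. fst x^2 + snd x^2 = 1 \<longrightarrow> bform E x x > 1"
    and ux: "fst x^2 + snd x^2 = 1" and u1: "fst y1^2 + snd y1^2 = 1" and u2: "fst y2^2 + snd y2^2 = 1"
    and d1: "det2 x y1 > 0" and d2: "det2 x y2 > 0"
    and r1: "bform E x y1 = 1" and r2: "bform E x y2 = 1"
  shows "y1 = y2"
proof -
  obtain al where al: "ee al = x" using ee_surj[OF ux] by blast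
  obtain a1 where a1: "al < a1" "a1 < al + pi" "ee a1 = y1" using lift_next[OF u1] d1 al by blast
  obtain a2 where a2: "al < a2" "a2 < al + pi" "ee a2 = y2" using lift_next[OF u2] d2 al by blast
  have "a1 = a2" using uniq_lemma[OF gp a1(1,2) a2(1,2)] r1 r2 al a1 a2 by simp
  then show ?thesis using a1 a2 by simp
qed

lemma sum_shift_periodic:
  fixes g :: "nat \<Rightarrow> real"
  assumes "\<And>i. g (i + n) = g i"
  shows "(\<Sum>i<n. g (i + k)) = (\<Sum>i<n. g i)"
proof (induction k)
  case 0 then show ?case by simp
next
  case (Suc k)
  define F where "F i = g (i + k)" for i
  have "(\<Sum>i<n. g (i + Suc k)) = (\<Sum>i<n. F (Suc i))" unfolding F_def by simp
  also have "\<dots> = (\<Sum>i<n. F i) + F n - F 0"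
    using sum.lessThan_Suc_shift[of F n] sum.lessThan_Suc[of F n] by linarith
  also have "F n = F 0" unfolding F_def using assms[of k] by (simp add: add.commute)
  finally show ?case using Suc.IH unfolding F_def by simp
qed

lemma W2:
  fixes E :: ellipse and v :: "nat \<Rightarrow> pt" and n :: nat
  assumes gp: "\<forall>x. fst x^2 + snd x^2 = 1 \<longrightarrow> bform E x x > 1"
    and unit: "\<And>j. fst (v j)^2 + snd (v j)^2 = 1"
    and rel: "\<And>j. bform E (v j) (v (Suc j)) = 1"
    and pos: "\<And>j. det2 (v j) (v (Suc j)) > 0"
    and per: "\<And>j. v (j + 2*n) = v j"
    and odd: "odd n"
  shows "(\<Sum>i<n. det2 (v (2*i+1)) (v (2*i+3))) = (\<Sum>i<n. det2 (v (2*i)) (v (2*i+2)))"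
proof -
  have "v n = v 0 \<or> v n = - v 0" using W1[of E v n, OF gp unit rel pos] per[of 0] by simp
  then have H: "det2 (v (j + n)) (v (j + n + 2)) = det2 (v j) (v (j + 2))" for j
  proof
    assume h0: "v n = v 0"
    have vn: "v (n + j) = v j" for j
    proof (induction j)
      case 0 then show ?case using h0 by simp
    next
      case (Suc j)
      show ?case using uniq_vec[OF gp unit[of "n+j"] unit[of "Suc (n+j)"] unit[of "Suc j"]]
          pos[of "n+j"] pos[of j] rel[of "n+j"] rel[of j] Suc.IH by simp
    qed
    have "v (j + n) = v j" "v (j + n + 2) = v (j + 2)"
      using vn[of j] vn[of "j+2"] by (simp_all add: ac_simps)
    then show ?thesis by simp
  next
    assume h0: "v n = - v 0"
    have vn: "v (n + j) = - v j" for j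
    proof (induction j)
      case 0 then show ?case using h0 by simp
    next
      case (Suc j)
      have un: "fst (- v (Suc j))^2 + snd (- v (Suc j))^2 = 1" using unit[of "Suc j"] by simp
      have dn: "det2 (- v j) (- v (Suc j)) > 0" using pos[of j] by (simp add: det2_def)
      have rn: "bform E (- v j) (- v (Suc j)) = 1" using rel[of j] by (simp add: bform_neg)
      show ?case using uniq_vec[OF gp unit[of "n+j"] unit[of "Suc (n+j)"] un]
          pos[of "n+j"] dn rel[of "n+j"] rn Suc.IH by simp
    qed
    have "v (j + n) = - v j" "v (j + n + 2) = - v (j + 2)"
      using vn[of j] vn[of "j+2"] by (simp_all add: ac_simps)
    then show ?thesis by (simp add: det2_def)
  qed
  define h where "h j = det2 (v j) (v (j + 2))" for j
  define g where "g i = h (2 * i)" for i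
  have gp': "g (i + n) = g i" for i
    unfolding g_def h_def using per[of "2*i"] per[of "2*i+2"]
    by (simp add: algebra_simps)
  obtain b where b: "n = 2 * b + 1" using odd by (rule oddE)
  define k where "k = b + 1"
  have "(\<Sum>i<n. det2 (v (2*i+1)) (v (2*i+3))) = (\<Sum>i<n. h (2*i+1))"
    unfolding h_def by (simp add: numeral_3_eq_3)
  also have "\<dots> = (\<Sum>i<n. h (2*i+1+n))"
    unfolding h_def by (rule sum.cong[OF refl]) (rule H[symmetric])
  also have "\<dots> = (\<Sum>i<n. g (i + k))" unfolding g_def k_def b by (intro sum.cong) (simp_all add: algebra_simps)
  also have "\<dots> = (\<Sum>i<n. g i)" using sum_shift_periodic[of g n k] gp' by simp
  also have "\<dots> = (\<Sum>i<n. det2 (v (2*i)) (v (2*i+2)))" unfolding g_def h_def by simp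
  finally show ?thesis .
qed

definition swp :: "pt \<Rightarrow> pt" where "swp x = (snd x, fst x)"

lemma W3:
  fixes E :: ellipse and v :: "nat \<Rightarrow> pt" and n :: nat and s :: real
  assumes gp: "\<forall>x. fst x^2 + snd x^2 = 1 \<longrightarrow> bform E x x > 1"
    and unit: "\<And>j. fst (v j)^2 + snd (v j)^2 = 1"
    and rel: "\<And>j. bform E (v j) (v (Suc j)) = 1"
    and pos: "\<And>j. s * det2 (v j) (v (Suc j)) > 0"
    and s: "s = 1 \<or> s = -1"
    and per: "\<And>j. v (j + 2*n) = v j"
    and odd: "odd n"
  shows "(\<Sum>i<n. det2 (v (2*i+1)) (v (2*i+3))) = (\<Sum>i<n. det2 (v (2*i)) (v (2*i+2)))"
  using s
proof
  assume "s = 1"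
  then show ?thesis using W2[OF gp unit rel _ per odd] pos by simp
next
  assume s1: "s = -1"
  define E' where "E' = \<lparr>ctr = (0::real,0::real), ca = cd E, cb = cb E, cd = ca E\<rparr>"
  define w where "w j = swp (v j)" for j
  have bf: "bform E' (swp a) (swp b) = bform E a b" for a b
    unfolding E'_def by (simp add: bform_def swp_def algebra_simps)
  have dt: "det2 (swp a) (swp b) = - det2 a b" for a b
    by (simp add: det2_def swp_def)
  have gp': "\<forall>x. fst x^2 + snd x^2 = 1 \<longrightarrow> bform E' x x > 1"
  proof (intro allI impI)
    fix x :: pt assume "fst x^2 + snd x^2 = 1"
    then have "fst (swp x)^2 + snd (swp x)^2 = 1" by (simp add: swp_def add.commute)
    then have "bform E (swp x) (swp x) > 1" using gp by blast
    moreover have "swp (swp x) = x" by (simp add: swp_def)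
    ultimately show "bform E' x x > 1" using bf[of "swp x" "swp x"] by simp
  qed
  have W: "(\<Sum>i<n. det2 (w (2*i+1)) (w (2*i+3))) = (\<Sum>i<n. det2 (w (2*i)) (w (2*i+2)))"
  proof (rule W2[OF gp'])
    show "fst (w j)^2 + snd (w j)^2 = 1" for j using unit[of j] by (simp add: w_def swp_def add.commute)
    show "bform E' (w j) (w (Suc j)) = 1" for j using rel[of j] bf by (simp add: w_def)
    show "det2 (w j) (w (Suc j)) > 0" for j using pos[of j] s1 dt by (simp add: w_def)
    show "w (j + 2*n) = w j" for j using per[of j] by (simp add: w_def)
    show "odd n" by (rule odd)
  qed
  then show ?thesis unfolding w_def dt by (simp add: sum_negf)
qed


lemma KMK_poly:
  fixes a b d a' b' d' mu :: real
  assumes h: "mu^2 * (a*d - b^2) = a'*d' - b'^2"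
  defines "k1 \<equiv> mu*a + a'" and "k2 \<equiv> mu*b + b'" and "k3 \<equiv> mu*d + d'"
  defines "T \<equiv> 2*mu*(a*d-b^2) + (d*a' - 2*b*b' + a*d')"
  shows "k1*(d*k1 - b*k2) + k2*(a*k2 - b*k1) = T * a'"
    and "k1*(d*k2 - b*k3) + k2*(a*k3 - b*k2) = T * b'"
    and "k2*(d*k2 - b*k3) + k3*(a*k3 - b*k2) = T * d'"
  using h unfolding k1_def k2_def k3_def T_def by algebra+


definition detE :: "ellipse \<Rightarrow> real" where "detE E = ca E * cd E - (cb E)^2"
definition Mv :: "ellipse \<Rightarrow> pt \<Rightarrow> pt" where
  "Mv E x = (ca E * fst x + cb E * snd x, cb E * fst x + cd E * snd x)"
definition Minv :: "ellipse \<Rightarrow> pt \<Rightarrow> pt" where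
  "Minv E x = ((cd E * fst x - cb E * snd x) / detE E, (ca E * snd x - cb E * fst x) / detE E)"
definition dot :: "pt \<Rightarrow> pt \<Rightarrow> real" where "dot u v = fst u * fst v + snd u * snd v"
definition muK :: "ellipse \<Rightarrow> ellipse \<Rightarrow> real" where "muK C D = sqrt (detE D / detE C)"
definition trK :: "ellipse \<Rightarrow> ellipse \<Rightarrow> real" where
  "trK C D = (cd C * ca D - 2 * cb C * cb D + ca C * cd D) / detE C"
definition lamK :: "ellipse \<Rightarrow> ellipse \<Rightarrow> real" where "lamK C D = sqrt (2 * muK C D + trK C D)"
definition Kell :: "ellipse \<Rightarrow> ellipse \<Rightarrow> ellipse" where
  "Kell C D = \<lparr>ctr = ctr C, ca = (muK C D * ca C + ca D) / lamK C D,
      cb = (muK C D * cb C + cb D) / lamK C D, cd = (muK C D * cd C + cd D) / lamK C D\<rparr>"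

lemma bform_Mv: "bform E u v = dot u (Mv E v)"
  by (simp add: bform_def dot_def Mv_def algebra_simps)

lemma detE_pos: "is_ellipse E \<Longrightarrow> detE E > 0"
  by (simp add: is_ellipse_def detE_def)

lemma Mv_Minv:
  assumes "detE E \<noteq> 0" shows "Mv E (Minv E x) = x"
proof -
  have 1: "ca E * (cd E * fst x - cb E * snd x) + cb E * (ca E * snd x - cb E * fst x) = detE E * fst x"
    by (simp add: detE_def algebra_simps power2_eq_square)
  have 2: "cb E * (cd E * fst x - cb E * snd x) + cd E * (ca E * snd x - cb E * fst x) = detE E * snd x"
    by (simp add: detE_def algebra_simps power2_eq_square)
  have "fst (Mv E (Minv E x)) = fst x"
    using assms 1 unfolding Mv_def Minv_def by (simp add: field_simps)
  moreover have "snd (Mv E (Minv E x)) = snd x"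
    using assms 2 unfolding Mv_def Minv_def by (simp add: field_simps)
  ultimately show ?thesis by (simp add: prod_eq_iff)
qed

lemma dot_Minv: "detE E \<noteq> 0 \<Longrightarrow> bform E u (Minv E x) = dot u x"
  by (simp add: bform_Mv Mv_Minv)

lemma cd_pos: "is_ellipse E \<Longrightarrow> cd E > 0"
proof -
  assume "is_ellipse E"
  then have "ca E > 0" "ca E * cd E > (cb E)^2" by (auto simp: is_ellipse_def)
  moreover have "(cb E)^2 \<ge> 0" by simp
  ultimately have "ca E * cd E > 0" "ca E > 0" by linarith+
  then show ?thesis by (simp add: zero_less_mult_iff)
qed

lemma tr_pos:
  assumes "is_ellipse C" "is_ellipse D"
  shows "cd C * ca D - 2 * cb C * cb D + ca C * cd D > 0"
proof -
  define a where "a = ca C" define b where "b = cb C" define d where "d = cd C"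
  define a' where "a' = ca D" define b' where "b' = cb D" define d' where "d' = cd D"
  have pa: "a > 0" "a' > 0" "d > 0" "d' > 0" "a*d > b^2" "a'*d' > b'^2"
    using assms cd_pos[OF assms(1)] cd_pos[OF assms(2)]
    unfolding is_ellipse_def a_def b_def d_def a'_def b'_def d'_def by linarith+
  have s: "d*a' + a*d' > 0" using pa(1-4) by (intro add_pos_pos mult_pos_pos)
  have ad0: "0 < a*d" using pa(1,3) by (rule mult_pos_pos)
  have "b^2 * b'^2 < (a*d)*(a'*d')"
    by (rule mult_strict_mono[OF pa(5) pa(6) ad0 zero_le_power2])
  moreover have "(d*a' + a*d')^2 \<ge> 4*(a*d)*(a'*d')"
  proof -
    have "(d*a' + a*d')^2 - 4*(a*d)*(a'*d') = (d*a' - a*d')^2" unfolding power2_eq_square by algebra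
    moreover have "(d*a' - a*d')^2 \<ge> 0" by simp
    ultimately show ?thesis by linarith
  qed
  moreover have "(2*b*b')^2 = 4*(b^2*b'^2)" by (simp add: power_mult_distrib)
  ultimately have "(d*a' + a*d')^2 > (2*b*b')^2" by linarith
  moreover have "\<bar>2*b*b'\<bar>^2 = (2*b*b')^2" by (rule power2_abs)
  ultimately have "\<bar>2*b*b'\<bar>^2 < (d*a' + a*d')^2" by linarith
  then have "\<bar>2*b*b'\<bar> < d*a' + a*d'"
    using power2_less_imp_less less_imp_le[OF s] by blast
  then show ?thesis unfolding a_def b_def d_def a'_def b'_def d'_def by linarith
qed

lemma lam_facts:
  assumes "is_ellipse C" "is_ellipse D"
  shows "muK C D > 0" "lamK C D > 0" "(muK C D)^2 * detE C = detE D"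
    "(lamK C D)^2 = 2 * muK C D + trK C D"
proof -
  have dc: "detE C > 0" "detE D > 0" using assms detE_pos by auto
  show m: "muK C D > 0" unfolding muK_def using dc by simp
  have "trK C D > 0" unfolding trK_def using tr_pos[OF assms] dc by simp
  then have p: "2 * muK C D + trK C D > 0" using m by simp
  then show "lamK C D > 0" unfolding lamK_def by simp
  show "(muK C D)^2 * detE C = detE D" unfolding muK_def using dc by simp
  show "(lamK C D)^2 = 2 * muK C D + trK C D" unfolding lamK_def using p by simp
qed

lemma KMK_gen:
  fixes a b d a' b' d' k1 k2 k3 l De x1 x2 :: real
  assumes l: "l \<noteq> 0" and De: "De \<noteq> 0"
    and P1: "k1*(d*k1 - b*k2) + k2*(a*k2 - b*k1) = (l^2*De) * a'"
    and P2: "k1*(d*k2 - b*k3) + k2*(a*k3 - b*k2) = (l^2*De) * b'"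
    and P3: "k2*(d*k2 - b*k3) + k3*(a*k3 - b*k2) = (l^2*De) * d'"
  shows "(k1/l)*((d*((k1/l)*x1+(k2/l)*x2) - b*((k2/l)*x1+(k3/l)*x2))/De)
        + (k2/l)*((a*((k2/l)*x1+(k3/l)*x2) - b*((k1/l)*x1+(k2/l)*x2))/De) = a'*x1 + b'*x2"
    and "(k2/l)*((d*((k1/l)*x1+(k2/l)*x2) - b*((k2/l)*x1+(k3/l)*x2))/De)
        + (k3/l)*((a*((k2/l)*x1+(k3/l)*x2) - b*((k1/l)*x1+(k2/l)*x2))/De) = b'*x1 + d'*x2"
proof -
  have "(k1/l)*((d*((k1/l)*x1+(k2/l)*x2) - b*((k2/l)*x1+(k3/l)*x2))/De)
        + (k2/l)*((a*((k2/l)*x1+(k3/l)*x2) - b*((k1/l)*x1+(k2/l)*x2))/De)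
      = (x1*(k1*(d*k1 - b*k2) + k2*(a*k2 - b*k1)) + x2*(k1*(d*k2 - b*k3) + k2*(a*k3 - b*k2)))/(l^2*De)"
    using l De by (simp add: field_simps power2_eq_square)
  also have "\<dots> = a'*x1 + b'*x2" unfolding P1 P2 using l De by (simp add: field_simps)
  finally show "(k1/l)*((d*((k1/l)*x1+(k2/l)*x2) - b*((k2/l)*x1+(k3/l)*x2))/De)
        + (k2/l)*((a*((k2/l)*x1+(k3/l)*x2) - b*((k1/l)*x1+(k2/l)*x2))/De) = a'*x1 + b'*x2" .
  have "(k2/l)*((d*((k1/l)*x1+(k2/l)*x2) - b*((k2/l)*x1+(k3/l)*x2))/De)
        + (k3/l)*((a*((k2/l)*x1+(k3/l)*x2) - b*((k1/l)*x1+(k2/l)*x2))/De)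
      = (x1*(k1*(d*k2 - b*k3) + k2*(a*k3 - b*k2)) + x2*(k2*(d*k2 - b*k3) + k3*(a*k3 - b*k2)))/(l^2*De)"
    using l De by (simp add: field_simps power2_eq_square)
  also have "\<dots> = b'*x1 + d'*x2" unfolding P2 P3 using l De by (simp add: field_simps)
  finally show "(k2/l)*((d*((k1/l)*x1+(k2/l)*x2) - b*((k2/l)*x1+(k3/l)*x2))/De)
        + (k3/l)*((a*((k2/l)*x1+(k3/l)*x2) - b*((k1/l)*x1+(k2/l)*x2))/De) = b'*x1 + d'*x2" .
qed

lemma KMK:
  assumes "is_ellipse C" "is_ellipse D"
  shows "Mv (Kell C D) (Minv C (Mv (Kell C D) x)) = Mv D x"
proof -
  obtain x1 x2 where x: "x = (x1, x2)" by fastforce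
  note lf = lam_facts[OF assms]
  define a where "a = ca C" define b where "b = cb C" define d where "d = cd C"
  define a' where "a' = ca D" define b' where "b' = cb D" define d' where "d' = cd D"
  define mu where "mu = muK C D" define l where "l = lamK C D"
  define De where "De = detE C"
  have De: "De > 0" using detE_pos[OF assms(1)] unfolding De_def .
  have h: "mu^2 * (a*d - b^2) = a'*d' - b'^2" using lf(3) unfolding mu_def detE_def a_def b_def d_def a'_def b'_def d'_def .
  have tr: "trK C D * (a*d - b^2) = d*a' - 2*b*b' + a*d'"
    using De unfolding trK_def De_def a_def b_def d_def a'_def b'_def d'_def detE_def by simp
  have T: "2*mu*(a*d-b^2) + (d*a' - 2*b*b' + a*d') = l^2 * De"
    unfolding tr[symmetric] l_def lf(4) De_def mu_def by (simp add: algebra_simps detE_def a_def b_def d_def)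
  note P = KMK_poly[OF h, unfolded T]
  have l0: "l \<noteq> 0" using lf unfolding l_def by simp
  note G = KMK_gen[OF l0 _ P, of x1 x2]
  show ?thesis
    unfolding x Mv_def Minv_def Kell_def ellipse.simps fst_conv snd_conv prod_eq_iff
    using G De
    unfolding a_def b_def d_def a'_def b'_def d'_def mu_def l_def De_def by simp
qed


lemma bform_pos:
  assumes "is_ellipse E" "x \<noteq> 0" shows "bform E x x > 0"
proof -
  obtain x1 x2 where x: "x = (x1, x2)" by fastforce
  have a: "ca E > 0" and De: "ca E * cd E - (cb E)^2 > 0" using assms by (auto simp: is_ellipse_def)
  have id: "ca E * bform E x x = (ca E * x1 + cb E * x2)^2 + (ca E * cd E - (cb E)^2) * x2^2"
    unfolding x bform_def by (simp add: power2_eq_square algebra_simps)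
  show ?thesis
  proof (cases "x2 = 0")
    case True
    then have "x1 \<noteq> 0" using assms x by (auto simp: zero_prod_def)
    then have "ca E * bform E x x > 0" unfolding id using True a by simp
    then show ?thesis using a by (simp add: zero_less_mult_iff)
  next
    case False
    then have "(ca E * cd E - (cb E)^2) * x2^2 > 0" using De by simp
    then have "ca E * bform E x x > 0" unfolding id
      by (metis add_nonneg_pos zero_le_power2)
    then show ?thesis using a by (simp add: zero_less_mult_iff)
  qed
qed

lemma bform_scale: "bform E (c * fst x, c * snd x) (c * fst x, c * snd x) = c^2 * bform E x x"
  by (simp add: bform_def power2_eq_square algebra_simps)

lemma inside_pos:
  assumes C: "is_ellipse C" and D: "is_ellipse D" and cc: "concentric C D"
    and ins: "ellipse_inside D C" and x: "x \<noteq> 0"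
  shows "bform D x x > bform C x x"
proof -
  define nn where "nn = bform D x x"
  have nn: "nn > 0" unfolding nn_def using bform_pos[OF D x] .
  define s where "s = 1 / sqrt nn"
  have s2: "s^2 * nn = 1" unfolding s_def using nn by (simp add: power_divide)
  define z where "z = ctr D + (s * fst x, s * snd x)"
  have zc: "z - ctr D = (s * fst x, s * snd x)" unfolding z_def by simp
  have "qform D z = 1" unfolding qform_def zc bform_scale using s2 nn_def by simp
  then have "z \<in> curve D" by (simp add: curve_def)
  then have "qform C z < 1" using ins unfolding ellipse_inside_def by blast
  then have "s^2 * bform C x x < 1"
    unfolding qform_def using cc zc bform_scale unfolding concentric_def by simp
  then have "s^2 * bform C x x < s^2 * nn" using s2 by simp
  then show ?thesis unfolding nn_def by (simp add: mult_less_cancel_left)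
qed

lemma Kform:
  "bform (Kell C D) x y = (muK C D * bform C x y + bform D x y) / lamK C D"
  by (cases "lamK C D = 0") (simp_all add: bform_def Kell_def field_simps)

lemma Kpos:
  assumes C: "is_ellipse C" and D: "is_ellipse D"
    and NM: "\<And>y. y \<noteq> 0 \<Longrightarrow> bform D y y > bform C y y" and x: "x \<noteq> 0"
  shows "bform (Kell C D) x x > bform C x x"
proof -
  note lf = lam_facts[OF C D]
  define a where "a = ca C" define b where "b = cb C" define d where "d = cd C"
  define a' where "a' = ca D" define b' where "b' = cb D" define d' where "d' = cd D"
  define De where "De = detE C"
  have De: "De > 0" using detE_pos[OF C] unfolding De_def .
  define e1 where "e1 = a' - a" define e2 where "e2 = b' - b" define e3 where "e3 = d' - d"
  define EE where "EE = e1 * e3 - e2^2"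
  have "bform D (1,0) (1,0) > bform C (1,0) (1,0)" using NM[of "(1,0)"] by (simp add: zero_prod_def)
  then have e1p: "e1 > 0" unfolding e1_def a_def a'_def bform_def by simp
  have "(- e2, e1) \<noteq> 0" using e1p by (simp add: zero_prod_def)
  then have "bform D (- e2, e1) (- e2, e1) > bform C (- e2, e1) (- e2, e1)" using NM by blast
  moreover have "bform D (- e2, e1) (- e2, e1) - bform C (- e2, e1) (- e2, e1) = e1 * EE"
    unfolding EE_def e1_def e2_def e3_def a_def b_def d_def a'_def b'_def d'_def bform_def
    by (simp add: power2_eq_square algebra_simps)
  ultimately have "e1 * EE > 0" by linarith
  then have EEp: "EE > 0" using e1p by (simp add: zero_less_mult_iff)
  define m where "m = bform C x x" define nn where "nn = bform D x x"
  have m: "m > 0" unfolding m_def using bform_pos[OF C x] .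
  have mn: "nn > m" unfolding m_def nn_def using NM[OF x] .
  define mu where "mu = muK C D" define l where "l = lamK C D" define tr where "tr = trK C D"
  have mu: "mu > 0" and l: "l > 0" using lf unfolding mu_def l_def by auto
  have tr: "tr * De = d*a' - 2*b*b' + a*d'"
    using De unfolding tr_def trK_def De_def a_def b_def d_def a'_def b'_def d'_def detE_def by simp
  have h: "mu^2 * De = a'*d' - b'^2" using lf(3) unfolding mu_def De_def detE_def a'_def b'_def d'_def .
  have "(mu^2 - tr) * De = mu^2 * De - tr * De" by (simp add: algebra_simps)
  also have "\<dots> = (a'*d' - b'^2) - (d*a' - 2*b*b' + a*d')" using h tr by simp
  also have "\<dots> = EE - De"
    unfolding EE_def e1_def e2_def e3_def De_def detE_def a_def b_def d_def a'_def b'_def d'_def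
    by (simp add: power2_eq_square algebra_simps)
  finally have "(mu^2 - tr) * De = EE - De" .
  then have mt: "mu^2 - tr = EE / De - 1" using De by (simp add: field_simps)
  have l2: "l^2 = 2*mu + tr" using lf(4) unfolding l_def mu_def tr_def .
  have lm: "(l*m)^2 = (2*mu + tr)*m^2" by (simp add: power_mult_distrib l2)
  have "(mu*m + nn)^2 - (l*m)^2 = (mu^2 - tr) * m^2 + nn^2 + 2*mu*m*(nn - m)"
    unfolding lm by (simp add: power2_eq_square algebra_simps)
  also have "\<dots> = m^2 * (EE / De) + (nn^2 - m^2) + 2*mu*m*(nn - m)"
    unfolding mt by (simp add: algebra_simps)
  also have "\<dots> > 0"
  proof -
    have "m^2 * (EE / De) > 0" using m EEp De by simp
    moreover have "nn^2 - m^2 > 0" using m mn by (simp add: power_strict_mono)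
    moreover have "2*mu*m*(nn - m) > 0" using mu m mn by simp
    ultimately show ?thesis by linarith
  qed
  finally have "0 < (mu*m + nn)^2 - (l*m)^2" .
  then have lt: "(l*m)^2 < (mu*m + nn)^2" by linarith
  have "mu*m > 0" by (rule mult_pos_pos[OF mu m])
  then have "0 \<le> mu*m + nn" using m mn by linarith
  then have "l*m < mu*m + nn" by (rule power2_less_imp_less[OF lt])
  then have "m < (mu*m + nn) / l" using l by (simp add: pos_less_divide_eq mult.commute)
  then show ?thesis unfolding Kform m_def nn_def mu_def l_def .
qed


lemma bform_comb:
  "bform E (A * fst t + B * fst v, A * snd t + B * snd v) (A * fst t + B * fst v, A * snd t + B * snd v)
   = A^2 * bform E t t + 2*A*B * bform E t v + B^2 * bform E v v"
  by (simp add: bform_def power2_eq_square algebra_simps)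

lemma tangency:
  assumes D: "is_ellipse D" and s: "s = 1 \<or> s = -1" and ne: "u \<noteq> u'"
    and t: "bform D t t = 1" and col: "det2 (u' - u) (t - u) = 0"
    and side: "\<And>w. bform D w w = 1 \<Longrightarrow> s * det2 (u' - u) (w - u) \<ge> 0"
  shows "bform D t u = 1 \<and> bform D t u' = 1 \<and> s * det2 u u' > 0"
proof -
  define d where "d = u' - u"
  have dne: "d \<noteq> 0" using ne unfolding d_def by simp
  define De where "De = detE D"
  have De: "De > 0" unfolding De_def using detE_pos[OF D] .
  define sg where "sg = 1 / sqrt De"
  have sg2: "sg^2 * De = 1" unfolding sg_def using De by (simp add: power_divide)
  have sgp: "sg > 0" unfolding sg_def using De by simp
  define v where "v = (- (cb D * fst t + cd D * snd t), ca D * fst t + cb D * snd t)"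
  have tv: "bform D t v = 0" unfolding v_def bform_def by (simp add: algebra_simps)
  have vv: "bform D v v = De * bform D t t"
    unfolding v_def bform_def De_def detE_def by (simp add: power2_eq_square algebra_simps)
  have dtv: "det2 t v = bform D t t" unfolding v_def bform_def det2_def by (simp add: algebra_simps)
  define E where "E = det2 d v"
  have E_eq: "E = bform D t d" unfolding E_def v_def bform_def det2_def by (simp add: algebra_simps)
  define F where "F = det2 d t"
  have s2: "s * s = 1" using s by auto
  have E0: "E = 0"
  proof (rule ccontr)
    assume En: "E \<noteq> 0"
    define e where "e = s * sg * E"
    have en: "e \<noteq> 0" unfolding e_def using En sgp s by auto
    define tau where "tau = - e / (\<bar>F\<bar> + 1)"
    define A where "A = (1 - tau^2) / (1 + tau^2)"
    define B where "B = 2 * tau * sg / (1 + tau^2)"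
    have tp: "1 + tau^2 > 0" by (simp add: add_pos_nonneg)
    define w where "w = (A * fst t + B * fst v, A * snd t + B * snd v)"
    have a2: "A^2 = (1 - tau^2)^2 / (1+tau^2)^2" unfolding A_def by (simp add: power_divide)
    have b2: "B^2 * De = (4*tau^2*(sg^2*De)) / (1+tau^2)^2"
      unfolding B_def by (simp add: power_divide power_mult_distrib)
    have "A^2 + B^2 * De = ((1 - tau^2)^2 + 4*tau^2*(sg^2*De)) / (1+tau^2)^2"
      unfolding a2 b2 by (rule add_divide_distrib[symmetric])
    also have "(1 - tau^2)^2 + 4*tau^2*(sg^2*De) = (1+tau^2)^2"
      unfolding sg2 by (simp add: power2_eq_square algebra_simps)
    also have "(1+tau^2)^2 / (1+tau^2)^2 = 1" using tp by simp
    finally have AB: "A^2 + B^2 * De = 1" .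
    have "bform D w w = 1" unfolding w_def bform_comb t tv vv using AB by simp
    then have sd: "s * det2 d (w - u) \<ge> 0" using side unfolding d_def by blast
    have "det2 d (w - u) = det2 d (w - t) + det2 d (t - u)" by (simp add: det2_def algebra_simps)
    also have "det2 d (t - u) = 0" using col unfolding d_def .
    also have "det2 d (w - t) = (A - 1) * F + B * E"
      unfolding w_def F_def E_def by (simp add: det2_def algebra_simps)
    finally have dw: "det2 d (w - u) = (A - 1) * F + B * E" by simp
    have tn: "1 + tau^2 \<noteq> 0" using tp by simp
    have Ai: "A * (1 + tau^2) = 1 - tau^2" unfolding A_def using tn by simp
    have Bi: "B * (1 + tau^2) = 2 * tau * sg" unfolding B_def using tn by simp
    have "((A - 1) * F + B * E) * (1 + tau^2) = (A * (1 + tau^2)) * F - (1 + tau^2) * F + (B * (1 + tau^2)) * E"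
      by (simp add: algebra_simps)
    also have "\<dots> = 2 * (tau * sg * E - tau^2 * F)" unfolding Ai Bi by (simp add: algebra_simps)
    finally have "(A - 1) * F + B * E = 2 * (tau * sg * E - tau^2 * F) / (1 + tau^2)"
      using tn by (simp add: eq_divide_eq)
    then have "s * det2 d (w - u) = 2 * (tau * e - tau^2 * (s*F)) / (1 + tau^2)"
      unfolding dw e_def by (simp add: algebra_simps)
    moreover have "tau * e - tau^2 * (s*F) < 0"
    proof -
      have fp: "\<bar>F\<bar> + 1 > 0" by simp
      have sf: "s * F + \<bar>F\<bar> \<ge> 0" using s by auto
      have tpv: "tau * (\<bar>F\<bar> + 1) = - e" unfolding tau_def using fp by simp
      have "(tau * e - tau^2 * (s*F)) * (\<bar>F\<bar> + 1)^2
          = (tau * (\<bar>F\<bar> + 1)) * (e * (\<bar>F\<bar> + 1)) - (tau * (\<bar>F\<bar> + 1))^2 * (s*F)"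
        by (simp add: power2_eq_square algebra_simps)
      also have "\<dots> = - (e^2 * (s * F + \<bar>F\<bar> + 1))" unfolding tpv by (simp add: power2_eq_square algebra_simps)
      finally have X: "(tau * e - tau^2 * (s*F)) * (\<bar>F\<bar> + 1)^2 = - (e^2 * (s * F + \<bar>F\<bar> + 1))" .
      moreover have "e^2 * (s * F + \<bar>F\<bar> + 1) > 0" using en sf by (simp add: add_nonneg_pos)
      ultimately have "(tau * e - tau^2 * (s*F)) * (\<bar>F\<bar> + 1)^2 < 0" by linarith
      moreover have "(\<bar>F\<bar> + 1)^2 > 0" using fp by simp
      ultimately show ?thesis by (simp add: mult_less_0_iff)
    qed
    ultimately have "s * det2 d (w - u) < 0" using tp by (simp add: divide_neg_pos)
    then show False using sd by simp
  qed
  have Ntd: "bform D t d = 0" using E0 E_eq by simp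
  define z where "z = t - u"
  have dz: "det2 d z = 0" using col unfolding d_def z_def .
  have "bform D t z = 0"
  proof -
    define n1 where "n1 = ca D * fst t + cb D * snd t"
    define n2 where "n2 = cb D * fst t + cd D * snd t"
    have nd: "n1 * fst d + n2 * snd d = 0" using Ntd unfolding n1_def n2_def bform_def by (simp add: algebra_simps)
    have dzc: "fst d * snd z = snd d * fst z" using dz unfolding det2_def by simp
    have nz: "bform D t z = n1 * fst z + n2 * snd z" unfolding n1_def n2_def bform_def by (simp add: algebra_simps)
    have 1: "fst d * (n1 * fst z + n2 * snd z) = fst z * (n1 * fst d + n2 * snd d)"
      using dzc by (simp add: algebra_simps)
    have 2: "snd d * (n1 * fst z + n2 * snd z) = snd z * (n1 * fst d + n2 * snd d)"
      using dzc by (simp add: algebra_simps)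
    have "fst d \<noteq> 0 \<or> snd d \<noteq> 0" using dne by (auto simp: prod_eq_iff zero_prod_def)
    then show ?thesis unfolding nz using 1 2 nd by auto
  qed
  then have tu: "bform D t u = 1" using t unfolding z_def bform_def by (simp add: algebra_simps)
  have tu': "bform D t u' = 1"
    using tu Ntd unfolding d_def bform_def by (simp add: algebra_simps)
  have "bform D (- t) (- t) = 1" using t by (simp add: bform_def)
  then have "s * det2 d (- t - u) \<ge> 0" using side unfolding d_def by blast
  moreover have "det2 d (- t - u) = 2 * det2 u u' - det2 d (t - u)"
    unfolding d_def by (simp add: det2_def algebra_simps)
  ultimately have sge: "s * det2 u u' \<ge> 0" using col unfolding d_def by simp
  have "det2 u u' \<noteq> 0"
  proof
    assume z0: "det2 u u' = 0"
    have F0: "F = 0" using col z0 unfolding F_def d_def by (simp add: det2_def algebra_simps)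
    have "det2 t v * fst d = E * fst t - F * fst v" "det2 t v * snd d = E * snd t - F * snd v"
      unfolding E_def F_def by (simp_all add: det2_def algebra_simps)
    then have "fst d = 0" "snd d = 0" using E0 F0 dtv t by simp_all
    then show False using dne by (simp add: prod_eq_iff zero_prod_def)
  qed
  then have "s * det2 u u' \<noteq> 0" using s by auto
  then have "s * det2 u u' > 0" using sge by linarith
  with tu tu' show ?thesis by simp
qed


lemma lagrange: "bform E u u * bform E v v - (bform E u v)^2 = detE E * (det2 u v)^2"
  by (simp add: bform_def detE_def det2_def power2_eq_square algebra_simps)

lemma bform_lin2':
  "bform E w (l * fst x + m * fst y, l * snd x + m * snd y) = l * bform E w x + m * bform E w y"
  by (simp add: bform_def algebra_simps)

lemma between:
  assumes C: "is_ellipse C" and Kp: "\<And>x. x \<noteq> 0 \<Longrightarrow> bform K x x > bform C x x"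
    and uu: "bform C u u = 1" and uu': "bform C u' u' = 1" and rr: "bform C r r = 1"
    and s: "s = 1 \<or> s = -1" and sd: "s * det2 u u' > 0"
    and k1: "bform K r u = 1" and k2: "bform K r u' = 1"
  shows "s * det2 u r > 0 \<and> s * det2 r u' > 0"
proof -
  define de where "de = det2 u u'"
  have de: "de \<noteq> 0" using sd unfolding de_def by auto
  define la where "la = det2 r u' / de"
  define mu where "mu = det2 u r / de"
  have rc: "r = (la * fst u + mu * fst u', la * snd u + mu * snd u')"
  proof -
    have "de * fst r = det2 r u' * fst u + det2 u r * fst u'"
      "de * snd r = det2 r u' * snd u + det2 u r * snd u'"
      unfolding de_def det2_def by (simp_all add: algebra_simps)
    then show ?thesis unfolding la_def mu_def using de
      by (simp add: prod_eq_iff field_simps)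
  qed
  have "r \<noteq> 0" using rr by (auto simp: bform_def zero_prod_def)
  then have "bform K r r > 1" using Kp[of r] rr by simp
  moreover have "bform K r r = la + mu"
    using bform_lin2'[of K r la u mu u'] k1 k2 rc by simp
  ultimately have lm1: "la + mu > 1" by simp
  define c where "c = bform C u u'"
  have "1 * 1 - c^2 = detE C * (det2 u u')^2" using lagrange[of C u u'] uu uu' unfolding c_def by simp
  moreover have "detE C * (det2 u u')^2 \<ge> 0" using detE_pos[OF C] by simp
  ultimately have "c^2 \<le> 1" by linarith
  then have c1: "c \<le> 1" using power2_le_imp_le[of c 1] by simp
  have rr': "1 = la^2 + 2*la*mu*c + mu^2"
    using rr bform_comb[of C la u mu u'] uu uu' unfolding c_def rc[symmetric] by simp
  have pos: "la > 0 \<and> mu > 0"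
  proof (rule ccontr)
    assume "\<not> (la > 0 \<and> mu > 0)"
    then have "la * mu \<le> 0" using lm1 by (auto simp: mult_le_0_iff)
    then have "la * mu * (c - 1) \<ge> 0" using c1 by (simp add: mult_nonpos_nonpos)
    then have "la^2 + 2*la*mu*c + mu^2 \<ge> (la + mu)^2" by (simp add: power2_eq_square algebra_simps)
    moreover have "(la + mu)^2 > 1" using lm1 by (simp add: one_less_power)
    ultimately show False using rr' by linarith
  qed
  have sde: "s * de > 0" using sd unfolding de_def .
  have "det2 u r = mu * de" unfolding mu_def using de by simp
  moreover have "det2 r u' = la * de" unfolding la_def using de by simp
  ultimately show ?thesis using pos sde
    by (metis mult.left_commute mult_pos_pos)
qed


definition sa :: "ellipse \<Rightarrow> real" where "sa C = sqrt (ca C)"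
definition sq :: "ellipse \<Rightarrow> real" where "sq C = sqrt (detE C / ca C)"
definition Lv :: "ellipse \<Rightarrow> pt \<Rightarrow> pt" where
  "Lv C x = (sa C * fst x + (cb C / sa C) * snd x, sq C * snd x)"
definition Li :: "ellipse \<Rightarrow> pt \<Rightarrow> pt" where
  "Li C z = (fst z / sa C - cb C / (sa C * sa C * sq C) * snd z, snd z / sq C)"

lemma sa_sq:
  assumes "is_ellipse C"
  shows "sa C > 0" "sq C > 0" "(sa C)^2 = ca C" "(sq C)^2 = detE C / ca C"
proof -
  have a: "ca C > 0" using assms by (simp add: is_ellipse_def)
  have d: "detE C > 0" using detE_pos[OF assms] .
  show "sa C > 0" "(sa C)^2 = ca C" unfolding sa_def using a by simp_all
  show "sq C > 0" "(sq C)^2 = detE C / ca C" unfolding sq_def using a d by simp_all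
qed

lemma bform_sym2: "bform E u v = bform E v u"
  by (simp add: bform_def algebra_simps)

lemma Li_Lv: assumes "is_ellipse C" shows "Li C (Lv C x) = x"
proof -
  note f = sa_sq[OF assms]
  have "sa C \<noteq> 0" "sq C \<noteq> 0" using f by auto
  then show ?thesis unfolding Li_def Lv_def by (simp add: prod_eq_iff field_simps)
qed

lemma Lv_Li: assumes "is_ellipse C" shows "Lv C (Li C z) = z"
proof -
  note f = sa_sq[OF assms]
  have "sa C \<noteq> 0" "sq C \<noteq> 0" using f by auto
  then show ?thesis unfolding Li_def Lv_def by (simp add: prod_eq_iff field_simps)
qed

lemma sq_expand: "(s::real) \<noteq> 0 \<Longrightarrow> (s*x + c/s*y)^2 = s^2*x^2 + 2*c*x*y + c^2/s^2*y^2"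
  by (simp add: power2_eq_square field_simps)

lemma Lv_norm: assumes "is_ellipse C" shows "fst (Lv C x)^2 + snd (Lv C x)^2 = bform C x x"
proof -
  note f = sa_sq[OF assms]
  have a: "ca C > 0" using assms by (simp add: is_ellipse_def)
  have "fst (Lv C x)^2 = ca C * fst x^2 + 2 * cb C * fst x * snd x + (cb C)^2 / ca C * snd x^2"
    unfolding Lv_def fst_conv using sq_expand[of "sa C" "fst x" "cb C" "snd x"] f by simp
  moreover have "snd (Lv C x)^2 = detE C / ca C * snd x^2"
    unfolding Lv_def snd_conv by (simp add: power_mult_distrib f)
  moreover have "(cb C)^2 / ca C + detE C / ca C = cd C"
    unfolding detE_def using a by (simp add: field_simps)
  ultimately have h3: "(cb C)^2 / ca C * snd x^2 + detE C / ca C * snd x^2 = cd C * snd x^2"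
    by (metis distrib_right)
  have "fst (Lv C x)^2 + snd (Lv C x)^2 = ca C * fst x^2 + 2 * cb C * fst x * snd x + cd C * snd x^2"
    using \<open>fst (Lv C x)^2 = _\<close> \<open>snd (Lv C x)^2 = _\<close> h3 by linarith
  also have "\<dots> = bform C x x" unfolding bform_def by (simp add: power2_eq_square algebra_simps)
  finally show ?thesis .
qed

lemma Lv_det: "det2 (Lv C x) (Lv C y) = sa C * sq C * det2 x y"
  unfolding Lv_def det2_def by (simp add: algebra_simps)

lemma Lv_neg: "Lv C (- x) = - Lv C x"
  unfolding Lv_def by simp

definition Gell :: "ellipse \<Rightarrow> ellipse \<Rightarrow> ellipse" where
  "Gell K C = \<lparr>ctr = (0,0), ca = bform K (Li C (1,0)) (Li C (1,0)),
     cb = bform K (Li C (1,0)) (Li C (0,1)), cd = bform K (Li C (0,1)) (Li C (0,1))\<rparr>"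

lemma Li_lin: "Li C z = (fst z * fst (Li C (1,0)) + snd z * fst (Li C (0,1)),
                         fst z * snd (Li C (1,0)) + snd z * snd (Li C (0,1)))"
  unfolding Li_def by (simp add: algebra_simps)

lemma bform_bilin:
  "bform K (a1 * fst p + a2 * fst q, a1 * snd p + a2 * snd q) (b1 * fst p + b2 * fst q, b1 * snd p + b2 * snd q)
   = a1 * b1 * bform K p p + (a1 * b2 + a2 * b1) * bform K p q + a2 * b2 * bform K q q"
  by (simp add: bform_def algebra_simps)

lemma Gell_bform: "bform (Gell K C) a b = bform K (Li C a) (Li C b)"
proof -
  have "bform K (Li C a) (Li C b) = fst a * fst b * bform K (Li C (1,0)) (Li C (1,0))
     + (fst a * snd b + snd a * fst b) * bform K (Li C (1,0)) (Li C (0,1))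
     + snd a * snd b * bform K (Li C (0,1)) (Li C (0,1))"
    by (subst Li_lin, subst (2) Li_lin, rule bform_bilin)
  then show ?thesis unfolding Gell_def by (simp add: bform_def algebra_simps)
qed

lemma pole:
  assumes C: "is_ellipse C" and dd: "det2 u u' \<noteq> 0"
    and t1: "bform D t u = 1" and t2: "bform D t u' = 1"
  shows "(THE q. q \<in> tangent_line C (ctr C + u) \<and> q \<in> tangent_line C (ctr C + u'))
         = ctr C + Minv C (Mv D t)"
proof (rule the_equality)
  have dC: "detE C \<noteq> 0" using detE_pos[OF C] by simp
  have e: "bform C x (Minv C (Mv D t)) = bform D t x" for x
    using dot_Minv[OF dC] bform_Mv bform_sym2 by metis
  show "ctr C + Minv C (Mv D t) \<in> tangent_line C (ctr C + u) \<and>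
        ctr C + Minv C (Mv D t) \<in> tangent_line C (ctr C + u')"
    unfolding tangent_line_def using e t1 t2 by simp
  fix q assume q: "q \<in> tangent_line C (ctr C + u) \<and> q \<in> tangent_line C (ctr C + u')"
  define w where "w = q - (ctr C + Minv C (Mv D t))"
  have w1: "bform C u w = 0" and w2: "bform C u' w = 0"
    using q e t1 t2 unfolding w_def tangent_line_def by (simp_all add: bform_def algebra_simps)
  define m where "m = Mv C w"
  have m1: "fst u * fst m + snd u * snd m = 0" and m2: "fst u' * fst m + snd u' * snd m = 0"
    using w1 w2 unfolding m_def bform_Mv dot_def by simp_all
  have "det2 u u' * fst m = snd u' * (fst u * fst m + snd u * snd m) - snd u * (fst u' * fst m + snd u' * snd m)"
    unfolding det2_def by (simp add: algebra_simps)
  then have "fst m = 0" using m1 m2 dd by simp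
  have "det2 u u' * snd m = fst u * (fst u' * fst m + snd u' * snd m) - fst u' * (fst u * fst m + snd u * snd m)"
    unfolding det2_def by (simp add: algebra_simps)
  then have "snd m = 0" using m1 m2 dd by simp
  then have "m = 0" using \<open>fst m = 0\<close> by (simp add: prod_eq_iff)
  have "w = Minv C (Mv C w)"
  proof -
    have "Mv C (Minv C (Mv C w)) = Mv C w" using Mv_Minv[OF dC] .
    moreover have "inj (Mv C)"
    proof (rule injI)
      fix x y assume "Mv C x = Mv C y"
      then have "Minv C (Mv C x) = Minv C (Mv C y)" by simp
      moreover have "Minv C (Mv C z) = z" for z
        using dC unfolding Minv_def Mv_def detE_def by (simp add: prod_eq_iff field_simps power2_eq_square)
      ultimately show "x = y" by simp
    qed
    ultimately show ?thesis by (metis injD)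
  qed
  then have "w = 0" using \<open>m = 0\<close> unfolding m_def by (simp add: Minv_def zero_prod_def)
  then show "q = ctr C + Minv C (Mv D t)" unfolding w_def by simp
qed


lemma det_Mv: "det2 (Mv K a) (Mv K b) = detE K * det2 a b"
  unfolding Mv_def det2_def detE_def by (simp add: power2_eq_square algebra_simps)

lemma div4: "(x1::real)/z * (x2/z) - x3/z * (x4/z) = (x1*x2 - x3*x4)/(z*z)"
  by (simp add: times_divide_times_eq diff_divide_distrib)

lemma det_Minv: "det2 (Minv C a) (Minv C b) = det2 a b / detE C"
proof (cases "detE C = 0")
  case True then show ?thesis by (simp add: Minv_def det2_def)
next
  case False
  have "det2 (Minv C a) (Minv C b) =
    ((cd C * fst a - cb C * snd a) * (ca C * snd b - cb C * fst b) - (ca C * snd a - cb C * fst a) * (cd C * fst b - cb C * snd b))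
      / (detE C * detE C)"
    unfolding Minv_def det2_def fst_conv snd_conv by (rule div4)
  also have "(cd C * fst a - cb C * snd a) * (ca C * snd b - cb C * fst b) - (ca C * snd a - cb C * fst a) * (cd C * fst b - cb C * snd b)
     = detE C * det2 a b" unfolding detE_def det2_def by (simp add: power2_eq_square algebra_simps)
  finally show ?thesis using False by simp
qed

lemma area_periodic:
  fixes f :: "nat \<Rightarrow> pt"
  assumes "\<And>i. f (i + n) = f i"
  shows "(\<Sum>i<n. det2 (c + f i) (c + f (Suc i))) = (\<Sum>i<n. det2 (f i) (f (Suc i)))"
proof -
  have e: "det2 (c + x) (c + y) = det2 x y + det2 c y - det2 c x" for x y
    by (simp add: det2_def algebra_simps)
  define g where "g i = det2 c (f i)" for i
  have gp: "g (i + n) = g i" for i unfolding g_def using assms by simp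
  have "(\<Sum>i<n. g (i + 1)) = (\<Sum>i<n. g i)" by (rule sum_shift_periodic[of g n 1, OF gp])
  then have "(\<Sum>i<n. det2 c (f (Suc i))) = (\<Sum>i<n. det2 c (f i))" unfolding g_def by simp
  then show ?thesis unfolding e by (simp add: sum.distrib sum_subtractf)
qed


lemma main_poly:
  fixes C D :: ellipse and n :: nat and s :: real and p :: "nat \<Rightarrow> pt"
  assumes odd: "odd n" and C: "is_ellipse C" and D: "is_ellipse D"
    and cc: "concentric C D" and ins: "ellipse_inside D C"
    and P: "poncelet_ngon C D n s p"
  shows "poly_area n (tangential_polygon C n p) = (detE (Kell C D) / detE C) * poly_area n p
         \<and> poly_area n p \<noteq> 0"
proof -
  have n0: "n > 0" using odd by (rule odd_pos)
  have s: "s = 1 \<or> s = -1" using P unfolding poncelet_ngon_def by auto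
  define c where "c = ctr C"
  have cD: "ctr D = c" using cc unfolding concentric_def c_def by simp
  have NM: "\<And>y. y \<noteq> 0 \<Longrightarrow> bform D y y > bform C y y" using inside_pos[OF C D cc ins] by blast
  define K where "K = Kell C D"
  have Kp: "\<And>x. x \<noteq> 0 \<Longrightarrow> bform K x x > bform C x x" unfolding K_def using Kpos[OF C D NM] by blast
  have dC: "detE C \<noteq> 0" using detE_pos[OF C] by simp
  have hp: "p j \<in> curve C \<and> tangent_side D s (p j) (p (Suc j mod n))" if "j < n" for j
    using P that unfolding poncelet_ngon_def by blast
  define u where "u i = p (i mod n) - c" for i
  have uper: "u (i + n) = u i" for i unfolding u_def by simp
  have uS: "u (Suc i) = p (Suc (i mod n) mod n) - c" for i unfolding u_def by (simp add: mod_Suc_eq)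
  have uC: "bform C (u i) (u i) = 1" for i
    using hp[of "i mod n"] n0 unfolding u_def curve_def qform_def c_def by simp
  define t where "t i = (SOME z. z \<in> curve D \<and> det2 (p (Suc (i mod n) mod n) - p (i mod n)) (z - p (i mod n)) = 0) - c" for i
  have tper: "t (i + n) = t i" for i unfolding t_def by simp
  have tang: "bform D (t i) (u i) = 1 \<and> bform D (t i) (u (Suc i)) = 1 \<and> s * det2 (u i) (u (Suc i)) > 0
      \<and> bform D (t i) (t i) = 1" for i
  proof -
    define j where "j = i mod n"
    have j: "j < n" unfolding j_def using n0 by simp
    have ts: "tangent_side D s (p j) (p (Suc j mod n))" using hp[OF j] by blast
    have ex: "\<exists>z. z \<in> curve D \<and> det2 (p (Suc j mod n) - p j) (z - p j) = 0"
      using ts unfolding tangent_side_def by blast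
    define z where "z = (SOME z. z \<in> curve D \<and> det2 (p (Suc j mod n) - p j) (z - p j) = 0)"
    have z: "z \<in> curve D \<and> det2 (p (Suc j mod n) - p j) (z - p j) = 0"
      unfolding z_def using someI_ex[OF ex] .
    have tz: "t i = z - c" unfolding t_def z_def j_def by simp
    have ui: "u i = p j - c" unfolding u_def j_def by simp
    have ui': "u (Suc i) = p (Suc j mod n) - c" unfolding uS j_def by simp
    have ne: "u i \<noteq> u (Suc i)" using ts unfolding tangent_side_def ui ui' by auto
    have tt: "bform D (t i) (t i) = 1" using z unfolding tz curve_def qform_def cD by simp
    have col: "det2 (u (Suc i) - u i) (t i - u i) = 0" using z unfolding tz ui ui' by simp
    have side: "s * det2 (u (Suc i) - u i) (w - u i) \<ge> 0" if w: "bform D w w = 1" for w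
    proof -
      have "c + w \<in> curve D" using w unfolding curve_def qform_def cD by simp
      then have "s * det2 (p (Suc j mod n) - p j) (c + w - p j) \<ge> 0"
        using ts unfolding tangent_side_def by blast
      then show ?thesis unfolding ui ui' by (simp add: algebra_simps)
    qed
    show ?thesis using tangency[OF D s ne tt col side] tt by simp
  qed
  define r where "r i = Minv C (Mv K (t i))" for i
  have rper: "r (i + n) = r i" for i unfolding r_def using tper by simp
  have KMK': "Mv K (r i) = Mv D (t i)" for i unfolding r_def K_def using KMK[OF C D] .
  have rC: "bform C (r i) (r i) = 1" for i
  proof -
    have "bform C (r i) (r i) = dot (r i) (Mv K (t i))" unfolding r_def using dot_Minv[OF dC] by simp
    also have "\<dots> = bform K (r i) (t i)" by (simp add: bform_Mv)
    also have "\<dots> = bform K (t i) (r i)" by (rule bform_sym)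
    also have "\<dots> = dot (t i) (Mv D (t i))" by (simp add: bform_Mv KMK')
    also have "\<dots> = bform D (t i) (t i)" by (simp add: bform_Mv)
    also have "\<dots> = 1" using tang by blast
    finally show ?thesis .
  qed
  have rK: "bform K (r i) x = bform D (t i) x" for i x
  proof -
    have "bform K (r i) x = bform K x (r i)" by (rule bform_sym)
    also have "\<dots> = dot x (Mv D (t i))" by (simp add: bform_Mv KMK')
    also have "\<dots> = bform D x (t i)" by (simp add: bform_Mv)
    also have "\<dots> = bform D (t i) x" by (rule bform_sym)
    finally show ?thesis .
  qed
  have k1: "bform K (r i) (u i) = 1" for i using rK tang by simp
  have k2: "bform K (r i) (u (Suc i)) = 1" for i using rK tang by simp
  have btw: "s * det2 (u i) (r i) > 0 \<and> s * det2 (r i) (u (Suc i)) > 0" for i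
    using between[OF C Kp uC uC rC s _ k1 k2] tang by blast
  define y where "y j = (if even j then u (j div 2) else r (j div 2))" for j
  define v where "v j = Lv C (y j)" for j
  define G where "G = Gell K C"
  have gp: "\<forall>x. fst x^2 + snd x^2 = 1 \<longrightarrow> bform G x x > 1"
  proof (intro allI impI)
    fix x :: pt assume x: "fst x^2 + snd x^2 = 1"
    have l1: "bform C (Li C x) (Li C x) = 1" using Lv_norm[OF C, of "Li C x"] Lv_Li[OF C] x by simp
    then have "Li C x \<noteq> 0" by (auto simp: bform_def zero_prod_def)
    then have "bform K (Li C x) (Li C x) > 1" using Kp[of "Li C x"] l1 by simp
    then show "bform G x x > 1" unfolding G_def Gell_bform .
  qed
  have yC: "bform C (y j) (y j) = 1" for j unfolding y_def using uC rC by simp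
  have yK: "bform K (y j) (y (Suc j)) = 1 \<and> s * det2 (y j) (y (Suc j)) > 0" for j
  proof (cases "even j")
    case True
    then have "Suc j div 2 = j div 2" "\<not> even (Suc j)" by (auto elim: evenE)
    then show ?thesis unfolding y_def using True k1 btw bform_sym[of K] by simp
  next
    case False
    then have "Suc j div 2 = Suc (j div 2)" "even (Suc j)" by (auto elim: oddE)
    then show ?thesis unfolding y_def using False k2 btw by simp
  qed
  have sasq: "sa C * sq C > 0" using sa_sq[OF C] by simp
  have W: "(\<Sum>i<n. det2 (v (2*i+1)) (v (2*i+3))) = (\<Sum>i<n. det2 (v (2*i)) (v (2*i+2)))"
  proof (rule W3[OF gp _ _ _ s _ odd])
    show "fst (v j)^2 + snd (v j)^2 = 1" for j unfolding v_def Lv_norm[OF C] by (rule yC)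
    show "bform G (v j) (v (Suc j)) = 1" for j
      unfolding v_def G_def Gell_bform Li_Lv[OF C] using yK by blast
    show "s * det2 (v j) (v (Suc j)) > 0" for j
    proof -
      have "s * det2 (v j) (v (Suc j)) = (sa C * sq C) * (s * det2 (y j) (y (Suc j)))"
        unfolding v_def Lv_det by (simp add: algebra_simps)
      moreover have "(sa C * sq C) * (s * det2 (y j) (y (Suc j))) > 0"
        using mult_pos_pos[OF sasq] yK[of j] by blast
      ultimately show ?thesis by linarith
    qed
    show "v (j + 2*n) = v j" for j
    proof -
      have "(j + 2*n) div 2 = j div 2 + n" by simp
      moreover have "even (j + 2*n) = even j" by simp
      moreover have "u (n + j div 2) = u (j div 2)" "r (n + j div 2) = r (j div 2)"
        using uper[of "j div 2"] rper[of "j div 2"] by (simp_all add: add.commute)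
      moreover have "u (j div 2 + n) = u (j div 2)" "r (j div 2 + n) = r (j div 2)"
        using uper[of "j div 2"] rper[of "j div 2"] by simp_all
      ultimately show ?thesis unfolding v_def y_def by simp
    qed
  qed
  have RU: "(\<Sum>i<n. det2 (r i) (r (Suc i))) = (\<Sum>i<n. det2 (u i) (u (Suc i)))"
  proof -
    have a: "v (2*i+1) = Lv C (r i)" "v (2*i+3) = Lv C (r (Suc i))"
        "v (2*i) = Lv C (u i)" "v (2*i+2) = Lv C (u (Suc i))" for i
      unfolding v_def y_def by simp_all
    have "(sa C * sq C) * (\<Sum>i<n. det2 (r i) (r (Suc i))) = (sa C * sq C) * (\<Sum>i<n. det2 (u i) (u (Suc i)))"
      using W unfolding a Lv_det sum_distrib_left by simp
    then show ?thesis using sa_sq[OF C] by auto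
  qed
  define AU where "AU = (\<Sum>i<n. det2 (u i) (u (Suc i)))"
  have umod: "u (j mod n) = u j" for j unfolding u_def by simp
  have pu: "p i = c + u i" if "i < n" for i using that unfolding u_def by simp
  have pu': "p (Suc i mod n) = c + u (Suc i)" for i
    using umod[of "Suc i"] unfolding u_def by simp
  have AP: "poly_area n p = AU / 2"
  proof -
    have "poly_area n p = (\<Sum>i<n. det2 (c + u i) (c + u (Suc i))) / 2"
      unfolding poly_area_def using pu pu' by (intro arg_cong[where f="\<lambda>x. x / 2"] sum.cong) auto
    also have "\<dots> = AU / 2" unfolding AU_def using area_periodic[of u n c] uper by simp
    finally show ?thesis .
  qed
  define phi where "phi x = Minv C (Mv K x)" for x
  have phidet: "det2 (phi a) (phi b) = (detE K / detE C) * det2 a b" for a b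
    unfolding phi_def det_Minv det_Mv by simp
  have tmod: "t (j mod n) = t j" for j unfolding t_def by simp
  have rmod: "r (j mod n) = r j" for j unfolding r_def using tmod by simp
  have TQ: "tangential_polygon C n p i = c + phi (r i)" if "i < n" for i
  proof -
    have "tangential_polygon C n p i
        = (THE q. q \<in> tangent_line C (ctr C + u i) \<and> q \<in> tangent_line C (ctr C + u (Suc i)))"
      unfolding tangential_polygon_def using pu[OF that] pu'[of i] c_def by simp
    also have "\<dots> = ctr C + Minv C (Mv D (t i))"
    proof (rule pole[OF C])
      show "det2 (u i) (u (Suc i)) \<noteq> 0" using tang[of i] by auto
      show "bform D (t i) (u i) = 1" "bform D (t i) (u (Suc i)) = 1" using tang by blast+
    qed
    finally show ?thesis unfolding phi_def KMK'[symmetric] c_def by simp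
  qed
  have TQ': "tangential_polygon C n p (Suc i mod n) = c + phi (r (Suc i))" for i
  proof -
    have "Suc i mod n < n" using n0 by simp
    then show ?thesis using TQ rmod by simp
  qed
  have AQ: "poly_area n (tangential_polygon C n p) = (detE K / detE C) * (AU / 2)"
  proof -
    have "poly_area n (tangential_polygon C n p) = (\<Sum>i<n. det2 (c + phi (r i)) (c + phi (r (Suc i)))) / 2"
      unfolding poly_area_def using TQ TQ' by (intro arg_cong[where f="\<lambda>x. x / 2"] sum.cong) auto
    also have "(\<Sum>i<n. det2 (c + phi (r i)) (c + phi (r (Suc i)))) = (\<Sum>i<n. det2 (phi (r i)) (phi (r (Suc i))))"
      using area_periodic[of "\<lambda>i. phi (r i)" n c] rper by simp
    also have "\<dots> = (detE K / detE C) * (\<Sum>i<n. det2 (r i) (r (Suc i)))"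
      unfolding phidet sum_distrib_left by simp
    also have "\<dots> = (detE K / detE C) * AU" unfolding RU AU_def ..
    finally show ?thesis by simp
  qed
  have "(\<Sum>i<n. s * det2 (u i) (u (Suc i))) > 0"
    using n0 tang by (intro sum_pos) auto
  then have "s * AU > 0" unfolding AU_def sum_distrib_left .
  then have "AU \<noteq> 0" by auto
  then show ?thesis using AP AQ unfolding K_def by auto
qed


theorem theorem1p3:
  fixes C D :: ellipse and n :: nat and s :: real and p p' :: "nat \<Rightarrow> pt"
  assumes "odd n"
    and "is_ellipse C" and "is_ellipse D"
    and "concentric C D" and "ellipse_inside D C"
    and "poncelet_ngon C D n s p"
    and "poncelet_ngon C D n s p'"
  shows "poly_area n (tangential_polygon C n p) / poly_area n p
       = poly_area n (tangential_polygon C n p') / poly_area n p'"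
proof -
  have 1: "poly_area n (tangential_polygon C n p) = (detE (Kell C D) / detE C) * poly_area n p"
    "poly_area n p \<noteq> 0"
    using main_poly[OF assms(1-5) assms(6)] by auto
  have 2: "poly_area n (tangential_polygon C n p') = (detE (Kell C D) / detE C) * poly_area n p'"
    "poly_area n p' \<noteq> 0"
    using main_poly[OF assms(1-5) assms(7)] by auto
  show ?thesis unfolding 1(1) 2(1) using 1(2) 2(2) by simp
qed

end
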